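(* Let $m\ge 1$, $q\ge 1$, and let $(A_0,\ldots,A_q)$ be a symmetric Clifford system on $\mathbb{R}^{2m}$. Define the cubic polynomial on $\mathbb{R}^{2m}\oplus\mathbb{R}^{q+1}$ $$\Phi(x):=y^{T}A_z y=\sum_{i=0}^q z_i\, y^T A_i y,\qquad x=(y,z)\in\mathbb{R}^{2m}\oplus\mathbb{R}^{q+1},$$ where $A_z:=\sum_{i=0}^q z_iA_i$. Then $\Phi$ is a radial minimal cubic; more precisely, $$L(\Phi)=-8|x|^2\,\Phi,$$ where $|x|^2=|y|^2+|z|^2$.
   Context: A (symmetric) Clifford system on $\mathbb{R}^{2m}$ with $q\ge1$ is a tuple $(A_0,\ldots,A_q)$ of symmetric linear endomorphisms (symmetric $2m\times 2m$ real matrices) satisfying $A_iA_j+A_jA_i=2\delta_{ij}I$ for all $0\le i,j\le q$, where $I$ is the identity. For a polynomial $f$ on $\mathbb{R}^n$, the operator $L$ is $L(f):=|\nabla f|^2\Delta f-\sum_{i,j=1}^n f_{x_i}f_{x_j}f_{x_ix_j}$. A homogeneous cubic polynomial $f$ is called a minimal cubic if $L(f)$ is divisible by $f$ in the polynomial ring, and a radial minimal cubic if $L(f)=c|x|^2 f$ for some constant $c\in\mathbb{R}$. *)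

theory Defs
  imports "HOL-Analysis.Analysis"
begin

text \<open>Symmetric Clifford system indexed by a finite type 'k (playing the role of {0..q}),
  acting on real^'n: symmetric matrices with A_i A_j + A_j A_i = 2 delta_ij I.\<close>
definition clifford_system :: "('k::finite \<Rightarrow> real^'n^'n) \<Rightarrow> bool" where
  "clifford_system A \<longleftrightarrow>
     (\<forall>i. transpose (A i) = A i) \<and>
     (\<forall>i j. A i ** A j + A j ** A i = (if i = j then 2 *\<^sub>R mat 1 else 0))"

definition pdiff :: "'d::finite \<Rightarrow> (real^'d \<Rightarrow> real) \<Rightarrow> real^'d \<Rightarrow> real" where
  "pdiff i f x = deriv (\<lambda>t. f (x + t *\<^sub>R axis i 1)) 0"

definition Lop :: "(real^'d::finite \<Rightarrow> real) \<Rightarrow> real^'d \<Rightarrow> real" where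
  "Lop f x = (\<Sum>i\<in>UNIV. (pdiff i f x)^2) * (\<Sum>i\<in>UNIV. pdiff i (pdiff i f) x)
     - (\<Sum>i\<in>UNIV. \<Sum>j\<in>UNIV. pdiff i f x * pdiff j f x * pdiff i (pdiff j f) x)"

text \<open>The cubic Phi(y,z) = sum_i z_i y^T A_i y on R^{2m} (+) R^{q+1}, with coordinates
  Inl a for y and Inr i for z.\<close>
definition Phi :: "('k::finite \<Rightarrow> real^'n::finite^'n) \<Rightarrow> real^('n + 'k) \<Rightarrow> real" where
  "Phi A x = (let y = (\<chi> a. x $ Inl a); z = (\<chi> i. x $ Inr i)
              in \<Sum>i\<in>UNIV. z $ i * (y \<bullet> (A i *v y)))"

end

theory Submission imports Defs begin

lemma sum_UNIV_plus: "(\<Sum>k\<in>(UNIV::('a::finite+'b::finite) set). f k) = (\<Sum>a\<in>UNIV. f (Inl a)) + (\<Sum>b\<in>UNIV. f (Inr b))"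
proof -
  have "(\<Sum>k\<in>(UNIV::('a+'b) set). f k) = sum f (Inl ` UNIV) + sum f (Inr ` UNIV)"
    by (subst UNIV_sum, rule sum.union_disjoint) auto
  also have "\<dots> = (\<Sum>a\<in>UNIV. f (Inl a)) + (\<Sum>b\<in>UNIV. f (Inr b))"
    by (simp add: sum.reindex)
  finally show ?thesis .
qed

lemma pdiff_hasderiv:
  assumes "(f has_derivative f') (at x)"
  shows "pdiff i f x = f' (axis i 1)"
proof -
  have l: "linear f'" using assms has_derivative_linear by blast
  have "((\<lambda>t::real. x + t *\<^sub>R axis i 1) has_derivative (\<lambda>t. t *\<^sub>R axis i 1)) (at 0)"
    by (auto intro!: derivative_eq_intros)
  moreover have "(f has_derivative f') (at (x + (0::real) *\<^sub>R axis i 1))" using assms by simp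
  ultimately have "((\<lambda>t. f (x + t *\<^sub>R axis i 1)) has_derivative (\<lambda>t. f' (t *\<^sub>R axis i 1))) (at 0)"
    by (rule has_derivative_compose)
  moreover have "(\<lambda>t. f' (t *\<^sub>R axis i 1)) = (*) (f' (axis i 1))"
    using linear_scale[OF l] by (auto simp: mult.commute)
  ultimately have "((\<lambda>t. f (x + t *\<^sub>R axis i 1)) has_field_derivative f' (axis i 1)) (at 0)"
    by (simp add: has_field_derivative_def)
  then show ?thesis unfolding pdiff_def by (rule DERIV_imp_deriv)
qed

definition yv :: "real^('n::finite + 'k::finite) \<Rightarrow> real^'n" where
  "yv x = (\<chi> a. x $ Inl a)"

lemma yv_bl: "bounded_linear yv"
proof -
  have "linear yv" by (rule linearI) (auto simp: yv_def vec_eq_iff)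
  then show ?thesis by (simp add: linear_conv_bounded_linear)
qed

lemma yv_deriv: "(yv has_derivative yv) (at x)"
  using yv_bl by (rule bounded_linear_imp_has_derivative)

lemma Byv_deriv: "((\<lambda>x. B *v yv x) has_derivative (\<lambda>h. B *v yv h)) (at x)"
  by (rule bounded_linear_imp_has_derivative, rule bounded_linear_compose[OF matrix_vector_mul_bounded_linear yv_bl])

lemma nth_deriv: "((\<lambda>x. x $ j) has_derivative (\<lambda>h. h $ j)) (at x)"
  by (rule bounded_linear_imp_has_derivative, rule bounded_linear_vec_nth)

lemma Phi_eq: "Phi A x = (\<Sum>i\<in>UNIV. x $ Inr i * (yv x \<bullet> (A i *v yv x)))"
  by (simp add: Phi_def yv_def Let_def)

lemma Phi_deriv: "(Phi A has_derivative (\<lambda>h. \<Sum>i\<in>UNIV. h $ Inr i * (yv x \<bullet> (A i *v yv x))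
     + x $ Inr i * (yv h \<bullet> (A i *v yv x) + yv x \<bullet> (A i *v yv h)))) (at x)"
  unfolding Phi_eq[abs_def]
  by (auto intro!: derivative_eq_intros yv_deriv Byv_deriv nth_deriv simp: algebra_simps)

lemma sym_inner: assumes "transpose B = B" shows "u \<bullet> (B *v v) = v \<bullet> (B *v (u::real^'n::finite))"
proof -
  have "u \<bullet> (B *v v) = (u v* B) \<bullet> v" by (simp add: dot_lmul_matrix)
  also have "u v* B = transpose B *v u" by simp
  finally show ?thesis using assms by (simp add: inner_commute)
qed

lemma Bax: "(B *v axis b (1::real)) $ a = B $ a $ b"
  by (simp add: matrix_vector_mult_basis column_def)

lemma yv_axl: "yv (axis (Inl b) 1 :: real^('n::finite+'k::finite)) = axis b 1"
  by (simp add: yv_def vec_eq_iff axis_def)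
lemma yv_axr: "yv (axis (Inr b) 1 :: real^('n::finite+'k::finite)) = 0"
  by (simp add: yv_def vec_eq_iff axis_def)

lemma ax_nth: "(axis k (1::real)) $ l = (if l = k then 1 else 0)"
  by (simp add: axis_def)

definition g1 :: "('k::finite \<Rightarrow> real^'n::finite^'n) \<Rightarrow> 'n \<Rightarrow> real^('n + 'k) \<Rightarrow> real" where
  "g1 A a x = 2 * (\<Sum>i\<in>UNIV. x $ Inr i * (A i *v yv x) $ a)"
definition g2 :: "('k::finite \<Rightarrow> real^'n::finite^'n) \<Rightarrow> 'k \<Rightarrow> real^('n + 'k) \<Rightarrow> real" where
  "g2 A j x = yv x \<bullet> (A j *v yv x)"

lemma pdiff_Phi_l: assumes "\<forall>i. transpose (A i) = A i"
  shows "pdiff (Inl a) (Phi A) = g1 A a"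
proof
  fix x
  have s: "u \<bullet> (A i *v axis a 1) = (A i *v u) $ a" for i u
  proof -
    have "u \<bullet> (A i *v axis a 1) = axis a 1 \<bullet> (A i *v u)" by (rule sym_inner) (use assms in auto)
    then show ?thesis by (simp add: inner_axis')
  qed
  show "pdiff (Inl a) (Phi A) x = g1 A a x"
    unfolding pdiff_hasderiv[OF Phi_deriv]
    by (simp add: yv_axl ax_nth inner_axis' g1_def sum_distrib_left s mult.left_commute)
qed

lemma ifmul: "(if P then 1 else 0) * (t::real) = (if P then t else 0)" by simp

lemma pdiff_Phi_r: "pdiff (Inr j) (Phi A) = g2 A j"
proof
  fix x
  show "pdiff (Inr j) (Phi A) x = g2 A j x"
    unfolding pdiff_hasderiv[OF Phi_deriv]
    by (simp add: yv_axr ax_nth g2_def ifmul)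
qed

lemma Byv_nth_deriv: "((\<lambda>x. (B *v yv x) $ a) has_derivative (\<lambda>h. (B *v yv h) $ a)) (at x)"
  by (rule bounded_linear_imp_has_derivative, rule bounded_linear_compose[OF bounded_linear_vec_nth], 
      rule bounded_linear_compose[OF matrix_vector_mul_bounded_linear yv_bl])

lemma g1_deriv: "(g1 A a has_derivative (\<lambda>h. 2 * (\<Sum>i\<in>UNIV. h $ Inr i * (A i *v yv x) $ a + x $ Inr i * (A i *v yv h) $ a))) (at x)"
  unfolding g1_def[abs_def]
  by (auto intro!: derivative_eq_intros Byv_nth_deriv nth_deriv simp: algebra_simps)

lemma g2_deriv: "(g2 A j has_derivative (\<lambda>h. yv h \<bullet> (A j *v yv x) + yv x \<bullet> (A j *v yv h))) (at x)"
  unfolding g2_def[abs_def]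
  by (auto intro!: derivative_eq_intros yv_deriv Byv_deriv simp: algebra_simps)

lemma pd_g1_l: "pdiff (Inl b) (g1 A a) x = 2 * (\<Sum>i\<in>UNIV. x $ Inr i * A i $ a $ b)"
  unfolding pdiff_hasderiv[OF g1_deriv] by (simp add: yv_axl ax_nth Bax)

lemma pd_g1_r: "pdiff (Inr j) (g1 A a) x = 2 * (A j *v yv x) $ a"
  unfolding pdiff_hasderiv[OF g1_deriv] by (simp add: yv_axr ax_nth ifmul)

lemma pd_g2_r: "pdiff (Inr i) (g2 A j) x = 0"
  unfolding pdiff_hasderiv[OF g2_deriv] by (simp add: yv_axr)

lemma pd_g2_l: assumes "transpose (A j) = A j" shows "pdiff (Inl b) (g2 A j) x = 2 * (A j *v yv x) $ b"
proof -
  have "yv x \<bullet> (A j *v axis b 1) = axis b 1 \<bullet> (A j *v yv x)" by (rule sym_inner) (use assms in auto)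
  then show ?thesis unfolding pdiff_hasderiv[OF g2_deriv] by (simp add: yv_axl inner_axis')
qed

lemma mv_sum: "B *v (\<Sum>i\<in>S. f i) = (\<Sum>i\<in>S. B *v f i)"
  by (induction S rule: infinite_finite_induct) (auto simp: matrix_vector_right_distrib)

lemma cliff_vec: assumes "clifford_system A"
  shows "A i *v (A j *v v) + A j *v (A i *v v) = (if i = j then 2 *\<^sub>R v else 0)"
proof -
  have "A i ** A j + A j ** A i = (if i = j then 2 *\<^sub>R mat 1 else 0)"
    using assms unfolding clifford_system_def by blast
  then have "(A i ** A j + A j ** A i) *v v = (if i = j then 2 *\<^sub>R mat 1 else 0) *v v" by simp
  then show ?thesis
    by (auto simp: matrix_vector_mult_add_rdistrib matrix_vector_mul_assoc scaleR_matrix_vector_assoc[symmetric])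
qed

lemma cliff_inner: assumes "clifford_system A"
  shows "(A i *v y) \<bullet> (A j *v y) = (if i = j then y \<bullet> y else 0)"
proof -
  have s: "\<forall>i. transpose (A i) = A i" using assms unfolding clifford_system_def by blast
  have e1: "(A i *v y) \<bullet> (A j *v y) = y \<bullet> (A i *v (A j *v y))"
    using sym_inner[of "A i" "A j *v y" y] s by (simp add: inner_commute)
  have e2: "(A i *v y) \<bullet> (A j *v y) = y \<bullet> (A j *v (A i *v y))"
    using sym_inner[of "A j" "A i *v y" y] s by (simp add: inner_commute)
  have "2 * ((A i *v y) \<bullet> (A j *v y)) = y \<bullet> (A i *v (A j *v y) + A j *v (A i *v y))"
    using e1 e2 by (simp add: inner_add_right)
  also have "\<dots> = (if i = j then 2 * (y \<bullet> y) else 0)" using cliff_vec[OF assms] by simp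
  finally show ?thesis by (auto split: if_splits)
qed

lemma NN: assumes "clifford_system A"
  shows "(\<Sum>i\<in>UNIV. z i *\<^sub>R (A i *v (\<Sum>j\<in>UNIV. z j *\<^sub>R (A j *v v))))
     = (\<Sum>i\<in>UNIV. (z i)^2) *\<^sub>R v"
proof -
  let ?T = "\<lambda>i j. (z i * z j) *\<^sub>R (A i *v (A j *v v))"
  have L: "(\<Sum>i\<in>UNIV. z i *\<^sub>R (A i *v (\<Sum>j\<in>UNIV. z j *\<^sub>R (A j *v v)))) = (\<Sum>i\<in>UNIV. \<Sum>j\<in>UNIV. ?T i j)"
    by (simp add: mv_sum scaleR_sum_right matrix_vector_mult_scaleR)
  have sw: "(\<Sum>i\<in>UNIV. \<Sum>j\<in>UNIV. ?T i j) = (\<Sum>i\<in>UNIV. \<Sum>j\<in>UNIV. ?T j i)"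
    by (rule sum.swap)
  have "2 *\<^sub>R (\<Sum>i\<in>UNIV. \<Sum>j\<in>UNIV. ?T i j) = (\<Sum>i\<in>UNIV. \<Sum>j\<in>UNIV. ?T i j) + (\<Sum>i\<in>UNIV. \<Sum>j\<in>UNIV. ?T j i)"
    by (simp only: scaleR_2 sw[symmetric])
  also have "\<dots> = (\<Sum>i\<in>UNIV. \<Sum>j\<in>UNIV. ?T i j + ?T j i)"
    by (simp only: sum.distrib)
  also have "\<dots> = (\<Sum>i\<in>UNIV. \<Sum>j\<in>UNIV. (z i * z j) *\<^sub>R (A i *v (A j *v v) + A j *v (A i *v v)))"
    by (intro sum.cong refl) (simp add: scaleR_add_right mult.commute)
  also have "\<dots> = (\<Sum>i\<in>UNIV. \<Sum>j\<in>UNIV. (if i = j then (2 * (z i)^2) *\<^sub>R v else 0))"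
    by (intro sum.cong refl) (simp add: cliff_vec[OF assms] power2_eq_square)
  also have "\<dots> = 2 *\<^sub>R ((\<Sum>i\<in>UNIV. (z i)^2) *\<^sub>R v)"
    by (simp add: scaleR_sum_left scaleR_sum_right)
  finally have F: "2 *\<^sub>R (\<Sum>i\<in>UNIV. \<Sum>j\<in>UNIV. ?T i j) = 2 *\<^sub>R ((\<Sum>i\<in>UNIV. (z i)^2) *\<^sub>R v)" .
  have "(\<Sum>i\<in>UNIV. \<Sum>j\<in>UNIV. ?T i j) = (\<Sum>i\<in>UNIV. (z i)^2) *\<^sub>R v"
    using F by (simp only: scaleR_cancel_left) simp
  then show ?thesis using L by simp
qed

lemma trace_zero: assumes "clifford_system A" and "j \<noteq> i" shows "trace (A i) = 0"
proof -
  have c: "\<And>i j. A i ** A j + A j ** A i = (if i = j then 2 *\<^sub>R mat 1 else 0)"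
    using assms unfolding clifford_system_def by blast
  have jj: "A j ** A j = mat 1"
  proof -
    have "2 *\<^sub>R (A j ** A j) = 2 *\<^sub>R mat 1" using c[of j j] by (simp add: scaleR_2)
    then show ?thesis by simp
  qed
  have ji: "A j ** A i = - (A i ** A j)" using c[of i j] assms(2)
    by (simp add: eq_neg_iff_add_eq_0 add.commute)
  have neg: "\<And>X Y::real^'n^'n. (- X) ** Y = - (X ** Y)"
    by (simp add: matrix_matrix_mult_def vec_eq_iff sum_negf)
  have tn: "\<And>X::real^'n^'n. trace (- X) = - trace X"
    by (simp add: trace_def sum_negf)
  have "trace (A i) = trace (A i ** (A j ** A j))" by (simp add: jj)
  also have "\<dots> = trace ((A i ** A j) ** A j)" by (simp add: matrix_mul_assoc)
  also have "\<dots> = trace (A j ** (A i ** A j))" by (rule trace_mul_sym)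
  also have "\<dots> = trace ((A j ** A i) ** A j)" by (simp add: matrix_mul_assoc)
  also have "\<dots> = - trace (A i ** (A j ** A j))" by (simp add: ji neg tn matrix_mul_assoc)
  also have "\<dots> = - trace (A i)" by (simp add: jj)
  finally show ?thesis by simp
qed

lemma regroup1: "(\<Sum>a\<in>UNIV. \<Sum>b\<in>UNIV. (2 * w a) * (2 * w b) * (2 * S b a))
   = (\<Sum>b\<in>UNIV. 8 * w b * (\<Sum>a\<in>UNIV. w a * S b a))" for w :: "'a::finite \<Rightarrow> real" and S
  by (subst sum.swap) (intro sum.cong refl, simp add: sum_distrib_left mult_ac)

lemma regroup2: "(\<Sum>a\<in>UNIV. \<Sum>j\<in>UNIV. (2 * w a) * g j * (2 * V j a))
   = (\<Sum>j\<in>UNIV. 4 * g j * (\<Sum>a\<in>UNIV. w a * V j a))" for w :: "'a::finite \<Rightarrow> real" and g V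
  by (subst sum.swap) (intro sum.cong refl, simp add: sum_distrib_left mult_ac)

theorem theorem1:
  fixes A :: "'k::finite \<Rightarrow> real^'n::finite^'n" and m q :: nat
  assumes "m \<ge> 1" and "q \<ge> 1"
    and "CARD('n) = 2 * m" and "CARD('k) = q + 1"
    and "clifford_system A"
  shows "Lop (Phi A) x = - 8 * (norm x)^2 * Phi A x"
proof -
  note cl = assms(5)
  have s: "\<forall>i. transpose (A i) = A i" using cl unfolding clifford_system_def by blast
  obtain i0 j0 :: 'k where ij: "i0 \<noteq> j0"
  proof -
    have "\<not> (UNIV::'k set) \<subseteq> {i0}" for i0
    proof
      assume "(UNIV::'k set) \<subseteq> {i0}"
      then have "CARD('k) \<le> card {i0}" by (intro card_mono) auto
      then show False using assms(2,4) by simp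
    qed
    then obtain a b :: 'k where "b \<notin> {a}" by blast
    then show ?thesis using that by blast
  qed
  have tr: "trace (A i) = 0" for i
  proof (cases "i = i0")
    case True then show ?thesis using trace_zero[OF cl, of j0 i] ij by auto
  next
    case False then show ?thesis using trace_zero[OF cl, of i0 i] by auto
  qed
  define y where "y = yv x"
  define c where "c = (\<Sum>i\<in>UNIV. (x $ Inr i)^2)"
  define w where "w = (\<Sum>i\<in>UNIV. x $ Inr i *\<^sub>R (A i *v y))"
  have g1w: "g1 A a x = 2 * w $ a" for a
    by (simp add: g1_def w_def y_def)
  have g2y: "g2 A j x = y \<bullet> (A j *v y)" for j
    by (simp add: g2_def y_def)
  have Phiw: "Phi A x = w \<bullet> y"
    by (subst inner_commute) (simp add: Phi_eq w_def y_def inner_sum_right)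
  have Phig: "Phi A x = (\<Sum>j\<in>UNIV. x $ Inr j * g2 A j x)"
    by (simp add: Phi_eq g2y y_def)
  have nrm: "(norm x)^2 = y \<bullet> y + c"
    by (simp only: power2_norm_eq_inner) (simp add: inner_vec_def sum_UNIV_plus y_def yv_def c_def power2_eq_square)
  have wA: "w \<bullet> (A j *v y) = x $ Inr j * (y \<bullet> y)" for j
    by (simp add: w_def inner_sum_left cliff_inner[OF cl] if_distrib cong: if_cong)
  have Nw: "(\<Sum>i\<in>UNIV. x $ Inr i *\<^sub>R (A i *v w)) = c *\<^sub>R y"
    unfolding w_def c_def by (rule NN[OF cl])
  have T2: "(\<Sum>k\<in>UNIV. pdiff k (pdiff k (Phi A)) x) = 0"
  proof -
    have "(\<Sum>k\<in>UNIV. pdiff k (pdiff k (Phi A)) x) = (\<Sum>a\<in>UNIV. 2 * (\<Sum>i\<in>UNIV. x $ Inr i * A i $ a $ a))"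
      by (simp add: sum_UNIV_plus pdiff_Phi_l[OF s] pdiff_Phi_r pd_g1_l pd_g2_r)
    also have "\<dots> = 2 * (\<Sum>i\<in>UNIV. \<Sum>a\<in>UNIV. x $ Inr i * A i $ a $ a)"
      by (subst sum.swap) (simp add: sum_distrib_left)
    also have "\<dots> = 2 * (\<Sum>i\<in>UNIV. x $ Inr i * trace (A i))"
      by (simp add: trace_def sum_distrib_left)
    finally show ?thesis by (simp add: tr)
  qed
  have T3: "(\<Sum>k\<in>UNIV. \<Sum>l\<in>UNIV. pdiff k (Phi A) x * pdiff l (Phi A) x * pdiff k (pdiff l (Phi A)) x)
     = (\<Sum>a\<in>UNIV. \<Sum>b\<in>UNIV. g1 A a x * g1 A b x * (2 * (\<Sum>i\<in>UNIV. x $ Inr i * A i $ b $ a)))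
       + (\<Sum>a\<in>UNIV. \<Sum>j\<in>UNIV. g1 A a x * g2 A j x * (2 * (A j *v yv x) $ a))
       + ((\<Sum>j\<in>UNIV. \<Sum>a\<in>UNIV. g2 A j x * g1 A a x * (2 * (A j *v yv x) $ a))
       + (\<Sum>j\<in>UNIV. \<Sum>i\<in>UNIV. g2 A j x * g2 A i x * 0))"
    apply (simp only: sum_UNIV_plus)
    apply (simp only: sum.distrib)
    apply (simp only: pdiff_Phi_l[OF s] pdiff_Phi_r pd_g1_l pd_g1_r pd_g2_l[OF s[rule_format]] pd_g2_r)
    done
  have B1: "(\<Sum>a\<in>UNIV. \<Sum>b\<in>UNIV. g1 A a x * g1 A b x * (2 * (\<Sum>i\<in>UNIV. x $ Inr i * A i $ b $ a)))
     = 8 * c * Phi A x"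
  proof -
    have v1: "(\<Sum>a\<in>UNIV. w $ a * (\<Sum>i\<in>UNIV. x $ Inr i * A i $ b $ a)) = c * y $ b" for b
    proof -
      have "(\<Sum>a\<in>UNIV. w $ a * (\<Sum>i\<in>UNIV. x $ Inr i * A i $ b $ a))
          = (\<Sum>a\<in>UNIV. \<Sum>i\<in>UNIV. x $ Inr i * (A i $ b $ a * w $ a))"
        by (simp add: sum_distrib_left mult_ac)
      also have "\<dots> = (\<Sum>i\<in>UNIV. \<Sum>a\<in>UNIV. x $ Inr i * (A i $ b $ a * w $ a))"
        by (rule sum.swap)
      also have "\<dots> = (\<Sum>i\<in>UNIV. x $ Inr i * (\<Sum>a\<in>UNIV. A i $ b $ a * w $ a))"
        by (simp add: sum_distrib_left)
      also have "\<dots> = (\<Sum>i\<in>UNIV. x $ Inr i *\<^sub>R (A i *v w)) $ b"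
        by (simp add: matrix_vector_mult_def)
      also have "\<dots> = c * y $ b" by (simp add: Nw)
      finally show ?thesis .
    qed
    have "(\<Sum>a\<in>UNIV. \<Sum>b\<in>UNIV. g1 A a x * g1 A b x * (2 * (\<Sum>i\<in>UNIV. x $ Inr i * A i $ b $ a)))
       = (\<Sum>b\<in>UNIV. 8 * w $ b * (\<Sum>a\<in>UNIV. w $ a * (\<Sum>i\<in>UNIV. x $ Inr i * A i $ b $ a)))"
      unfolding g1w by (rule regroup1)
    also have "\<dots> = (\<Sum>b\<in>UNIV. 8 * c * (w $ b * y $ b))" by (simp only: v1 mult_ac)
    also have "\<dots> = 8 * c * (w \<bullet> y)" by (simp add: inner_vec_def sum_distrib_left)
    finally show ?thesis by (simp add: Phiw)
  qed
  have B2: "(\<Sum>a\<in>UNIV. \<Sum>j\<in>UNIV. g1 A a x * g2 A j x * (2 * (A j *v yv x) $ a))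
       = 4 * (y \<bullet> y) * Phi A x"
  proof -
    have "(\<Sum>a\<in>UNIV. \<Sum>j\<in>UNIV. g1 A a x * g2 A j x * (2 * (A j *v yv x) $ a))
      = (\<Sum>j\<in>UNIV. 4 * g2 A j x * (\<Sum>a\<in>UNIV. w $ a * (A j *v yv x) $ a))"
      unfolding g1w by (rule regroup2)
    also have "\<dots> = (\<Sum>j\<in>UNIV. 4 * g2 A j x * (w \<bullet> (A j *v y)))" by (simp add: inner_vec_def y_def)
    also have "\<dots> = (\<Sum>j\<in>UNIV. 4 * (y \<bullet> y) * (x $ Inr j * g2 A j x))"
      by (simp only: wA mult_ac)
    also have "\<dots> = 4 * (y \<bullet> y) * (\<Sum>j\<in>UNIV. x $ Inr j * g2 A j x)"
      by (simp only: sum_distrib_left)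
    finally show ?thesis by (simp only: Phig)
  qed
  have B3: "(\<Sum>j\<in>UNIV. \<Sum>a\<in>UNIV. g2 A j x * g1 A a x * (2 * (A j *v yv x) $ a))
      = (\<Sum>a\<in>UNIV. \<Sum>j\<in>UNIV. g1 A a x * g2 A j x * (2 * (A j *v yv x) $ a))"
    by (subst sum.swap) (simp only: mult_ac)
  show ?thesis
    unfolding Lop_def T2 T3 B1 B3 B2 nrm by (simp add: algebra_simps)
qed

end
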